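(* Let $R$ be a commutative ring with identity, let $(S,\leq)$ be a strictly ordered monoid, and suppose $S=S_1\sqcup S_2$ is a disjoint union of subsets. Define the $R$-linear map $P:R\,S\to R\,S$ on the monoid algebra by $P(x)=x$ for $x\in S_1$ and $P(x)=0$ for $x\in S_2$, and define $\widehat{P}:[[R^{S,\leq}]]\to[[R^{S,\leq}]]$ by $\widehat{P}(f)(s)=f(s)$ for $s\in S_1$ and $\widehat{P}(f)(s)=0$ for $s\in S_2$. Then $P$ is a Rota-Baxter operator (of weight $-1$) on $R\,S$ if and only if $\widehat{P}$ is a Rota-Baxter operator (of weight $-1$) on $[[R^{S,\leq}]]$.
   Context: All monoids are commutative and written additively with neutral element $0$. A partially ordered set is artinian if every strictly decreasing sequence is finite, and narrow if every subset of pairwise incomparable elements is finite. A strictly ordered monoid is a commutative monoid $S$ with a partial order $\leq$ such that $s<s'$ implies $s+t<s'+t$ for all $s,s',t\in S$. The ring of generalized power series $[[R^{S,\leq}]]$ is the set of maps $f:S\to R$ with artinian and narrow support $\{s: f(s)\neq 0\}$, with pointwise addition and convolution $(fg)(s)=\sum f(u)g(v)$ over the finitely many pairs $(u,v)$ with $u+v=s$, $f(u)\neq0$, $g(v)\neq0$. A Rota-Baxter operator of weight $-1$ on an associative $R$-algebra $A$ is an $R$-linear $P:A\to A$ with $P(x)P(y)=P(xP(y))+P(P(x)y)-P(xy)$ for all $x,y\in A$. *)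

theory Defs
  imports Main
begin

definition supp :: "('a \<Rightarrow> 'r::zero) \<Rightarrow> 'a set" where
  "supp f = {s. f s \<noteq> 0}"

definition artinian :: "'a::order set \<Rightarrow> bool" where
  "artinian A \<longleftrightarrow> \<not> (\<exists>g :: nat \<Rightarrow> 'a. (\<forall>n. g n \<in> A \<and> g (Suc n) < g n))"

definition narrow :: "'a::order set \<Rightarrow> bool" where
  "narrow A \<longleftrightarrow> (\<forall>B \<subseteq> A. (\<forall>x\<in>B. \<forall>y\<in>B. x \<noteq> y \<longrightarrow> \<not> x \<le> y \<and> \<not> y \<le> x) \<longrightarrow> finite B)"

definition strictly_ordered_monoid :: "'a::{comm_monoid_add, order} itself \<Rightarrow> bool" where
  "strictly_ordered_monoid _ \<longleftrightarrow> (\<forall>s s' t :: 'a. s < s' \<longrightarrow> s + t < s' + t)"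

definition monoid_algebra :: "('a \<Rightarrow> 'r::zero) set" where
  "monoid_algebra = {f. finite (supp f)}"

definition gen_power_series :: "('a::order \<Rightarrow> 'r::zero) set" where
  "gen_power_series = {f. artinian (supp f) \<and> narrow (supp f)}"

definition conv :: "('a::comm_monoid_add \<Rightarrow> 'r::comm_ring_1) \<Rightarrow> ('a \<Rightarrow> 'r) \<Rightarrow> 'a \<Rightarrow> 'r" where
  "conv f g s = (\<Sum>(u, v) \<in> {(u, v). u + v = s \<and> f u \<noteq> 0 \<and> g v \<noteq> 0}. f u * g v)"

definition rota_baxter :: "('a::comm_monoid_add \<Rightarrow> 'r::comm_ring_1) set \<Rightarrow> (('a \<Rightarrow> 'r) \<Rightarrow> ('a \<Rightarrow> 'r)) \<Rightarrow> bool" where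
  "rota_baxter A P \<longleftrightarrow>
     (\<forall>x\<in>A. P x \<in> A) \<and>
     (\<forall>x\<in>A. \<forall>y\<in>A. P (\<lambda>s. x s + y s) = (\<lambda>s. P x s + P y s)) \<and>
     (\<forall>c. \<forall>x\<in>A. P (\<lambda>s. c * x s) = (\<lambda>s. c * P x s)) \<and>
     (\<forall>x\<in>A. \<forall>y\<in>A. conv (P x) (P y) = (\<lambda>s. P (conv x (P y)) s + P (conv (P x) y) s - P (conv x y) s))"

end

theory Submission imports Defs "HOL-Library.Ramsey" begin

lemma hom_dec:
  fixes w :: "nat \<Rightarrow> 'a::order"
  assumes "artinian A" "\<forall>n. w n \<in> A" "infinite Y" "\<forall>i\<in>Y. \<forall>j\<in>Y. i<j \<longrightarrow> w j < w i"
  shows False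
proof -
  let ?g = "\<lambda>n. w (enumerate Y n)"
  have "\<forall>n. ?g n \<in> A \<and> ?g (Suc n) < ?g n"
    using assms enumerate_in_set enumerate_mono by (metis lessI)
  then have "\<exists>g. \<forall>n. g n \<in> A \<and> g (Suc n) < g n" by (rule exI[of _ "\<lambda>n. w (enumerate Y n)"])
  thus False using assms(1) unfolding artinian_def by blast
qed

lemma narrowD: "narrow A \<Longrightarrow> B \<subseteq> A \<Longrightarrow> (\<forall>x\<in>B. \<forall>y\<in>B. x \<noteq> y \<longrightarrow> \<not> x \<le> y \<and> \<not> y \<le> x) \<Longrightarrow> finite B"
  unfolding narrow_def by blast

lemma hom_inc:
  fixes w :: "nat \<Rightarrow> 'a::order"
  assumes "narrow A" "\<forall>n. w n \<in> A" "infinite Y" "\<forall>i\<in>Y. \<forall>j\<in>Y. i<j \<longrightarrow> \<not> w i \<le> w j \<and> \<not> w j \<le> w i"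
  shows False
proof -
  have inc: "\<not> w i \<le> w j \<and> \<not> w j \<le> w i" if "i \<in> Y" "j \<in> Y" "i \<noteq> j" for i j
  proof (cases "i < j")
    case True then show ?thesis using assms(4) that by blast
  next
    case False then have "j < i" using that(3) by simp
    then show ?thesis using assms(4) that by blast
  qed
  have "w ` Y \<subseteq> A" using assms(2) by auto
  moreover have "\<forall>x\<in>w ` Y. \<forall>y\<in>w ` Y. x \<noteq> y \<longrightarrow> \<not> x \<le> y \<and> \<not> y \<le> x"
  proof (intro ballI impI)
    fix x y assume "x \<in> w ` Y" "y \<in> w ` Y" "x \<noteq> y"
    then obtain i j where "i \<in> Y" "j \<in> Y" "x = w i" "y = w j" by blast
    with \<open>x \<noteq> y\<close> inc[of i j] show "\<not> x \<le> y \<and> \<not> y \<le> x" by blast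
  qed
  ultimately have fin: "finite (w ` Y)" by (rule narrowD[OF assms(1)])
  have inj: "inj_on w Y"
  proof (rule inj_onI, rule ccontr)
    fix i j assume "i \<in> Y" "j \<in> Y" "w i = w j" "i \<noteq> j"
    then show False using inc[of i j] by simp
  qed
  have "finite Y" by (rule finite_imageD[OF fin inj])
  then show False using assms(3) by simp
qed

lemma fin_pairs:
  fixes A B :: "'a::{comm_monoid_add, order} set"
  assumes som: "strictly_ordered_monoid TYPE('a)"
    and A: "artinian A" "narrow A" and B: "artinian B" "narrow B"
  shows "finite {(u, v). u + v = s \<and> u \<in> A \<and> v \<in> B}"
proof (rule ccontr)
  assume "infinite {(u, v). u + v = s \<and> u \<in> A \<and> v \<in> B}"
  then obtain p :: "nat \<Rightarrow> 'a \<times> 'a" where p: "inj p" "range p \<subseteq> {(u, v). u + v = s \<and> u \<in> A \<and> v \<in> B}"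
    using infinite_countable_subset by blast
  define u where "u = fst \<circ> p"
  define v where "v = snd \<circ> p"
  have uA: "\<forall>n. u n \<in> A" and vB: "\<forall>n. v n \<in> B" and uv: "\<And>n. u n + v n = s"
  proof -
    have "\<And>n. p n \<in> {(u, v). u + v = s \<and> u \<in> A \<and> v \<in> B}" using p(2) unfolding image_subset_iff by simp
    then show "\<forall>n. u n \<in> A" "\<forall>n. v n \<in> B" "\<And>n. u n + v n = s"
      unfolding u_def v_def by (auto simp: case_prod_beta)
  qed
  have st: "\<And>a b t::'a. a < b \<Longrightarrow> a + t < b + t" using som unfolding strictly_ordered_monoid_def by blast
  have no0: False if "i < j" "u i \<le> u j" "v i \<le> v j" for i j
  proof -
    have ne: "u i \<noteq> u j \<or> v i \<noteq> v j" using p(1) \<open>i<j\<close> unfolding u_def v_def inj_def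
      by (metis comp_apply less_irrefl prod.collapse)
    show False
    proof (cases "u i = u j")
      case True
      then have "v i < v j" using ne that by auto
      then have "v i + u i < v j + u i" by (rule st)
      then have "s < s" using uv[of i] uv[of j] True by (simp add: add.commute)
      thus False by simp
    next
      case False
      then have "u i < u j" using that by auto
      then have "u i + v i < u j + v i" by (rule st)
      also have "\<dots> \<le> u j + v j"
      proof (cases "v i = v j")
        case False
        then have "v i < v j" using that by auto
        then have "v i + u j < v j + u j" by (rule st)
        thus ?thesis by (simp add: add.commute)
      qed simp
      finally show False using uv[of i] uv[of j] by simp
    qed
  qed
  define col :: "nat \<Rightarrow> nat \<Rightarrow> nat" where "col i j =
    (if u i \<le> u j \<and> v i \<le> v j then 0
     else if u j < u i then 1
     else if \<not> u i \<le> u j then 2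
     else if v j < v i then 3 else 4)" for i j
  define f where "f X = col (Min X) (Max X)" for X
  obtain Y c where Y: "infinite Y" "c < 5" "\<forall>x\<in>Y. \<forall>y\<in>Y. x\<noteq>y \<longrightarrow> f {x, y} = c"
  proof -
    have "\<forall>x\<in>UNIV. \<forall>y\<in>UNIV. x\<noteq>y \<longrightarrow> f {x, y} < (5::nat)" unfolding f_def col_def by simp
    from Ramsey2[OF infinite_UNIV_nat this] that show ?thesis by blast
  qed
  have hc: "col i j = c" if "i \<in> Y" "j \<in> Y" "i < j" for i j
  proof -
    have "Min {i,j} = i" "Max {i,j} = j" using \<open>i<j\<close> by auto
    then show ?thesis using Y(3) that unfolding f_def by force
  qed
  show False
  proof -
    have "c = 0 \<or> c = 1 \<or> c = 2 \<or> c = 3 \<or> c = 4" using Y(2) by auto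
    moreover have "c \<noteq> 0"
    proof
      assume "c = 0"
      obtain i j where "i \<in> Y" "j \<in> Y" "i < j"
        using Y(1) by (metis infinite_nat_iff_unbounded not_finite_existsD)
      then show False using hc[of i j] \<open>c=0\<close> no0[of i j] unfolding col_def by (auto split: if_splits)
    qed
    moreover have "c \<noteq> 1"
    proof
      assume "c = 1"
      show False
      proof (rule hom_dec[OF A(1) uA Y(1)], intro ballI impI)
        fix i j assume "i \<in> Y" "j \<in> Y" "i < j"
        then have "col i j = 1" using hc \<open>c=1\<close> by simp
        then show "u j < u i" unfolding col_def by (auto split: if_splits simp add: less_le_not_le dest: order.antisym)
      qed
    qed
    moreover have "c \<noteq> 2"
    proof
      assume "c = 2"
      show False
      proof (rule hom_inc[OF A(2) uA Y(1)], intro ballI impI)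
        fix i j assume "i \<in> Y" "j \<in> Y" "i < j"
        then have "col i j = 2" using hc \<open>c=2\<close> by simp
        then show "\<not> u i \<le> u j \<and> \<not> u j \<le> u i" unfolding col_def by (auto split: if_splits simp add: less_le_not_le dest: order.antisym)
      qed
    qed
    moreover have "c \<noteq> 3"
    proof
      assume "c = 3"
      show False
      proof (rule hom_dec[OF B(1) vB Y(1)], intro ballI impI)
        fix i j assume "i \<in> Y" "j \<in> Y" "i < j"
        then have "col i j = 3" using hc \<open>c=3\<close> by simp
        then show "v j < v i" unfolding col_def by (auto split: if_splits simp add: less_le_not_le dest: order.antisym)
      qed
    qed
    moreover have "c \<noteq> 4"
    proof
      assume "c = 4"
      show False
      proof (rule hom_inc[OF B(2) vB Y(1)], intro ballI impI)
        fix i j assume "i \<in> Y" "j \<in> Y" "i < j"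
        then have "col i j = 4" using hc \<open>c=4\<close> by simp
        then show "\<not> v i \<le> v j \<and> \<not> v j \<le> v i" unfolding col_def by (auto split: if_splits simp add: less_le_not_le dest: order.antisym)
      qed
    qed
    ultimately show False by blast
  qed
qed
lemma conv_sum:
  assumes "finite F" "{(u,v). u+v=s \<and> f u\<noteq>0 \<and> g v\<noteq>0} \<subseteq> F" "F \<subseteq> {(u,v). u+v=s}"
  shows "conv f g s = (\<Sum>(u,v)\<in>F. f u * g v)"
  unfolding conv_def
  by (rule sum.mono_neutral_left[OF assms(1) assms(2)]) (use assms(3) in auto)

lemma rb_trivial:
  assumes "(1::'r::comm_ring_1) = 0"
  shows "rota_baxter (A :: ('a::comm_monoid_add \<Rightarrow> 'r) set) P"
proof -
  have z: "\<And>x::'r. x = 0" by (metis assms mult_1_right mult_zero_right)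
  have e: "\<And>f g :: 'a \<Rightarrow> 'r. f = g" by (rule ext) (metis z)
  show ?thesis unfolding rota_baxter_def
    apply (intro conjI)
    apply (metis e)
    apply (metis e)
    apply (metis e)
    apply (metis e)
    done
qed

lemma conv_delta:
  "conv (\<lambda>t. if t = u then a else 0) (\<lambda>t. if t = v then b else (0::'r::comm_ring_1)) s
     = (if s = u + v then a * b else 0)"
proof -
  have "{(p, q). p + q = s \<and> (if p = u then a else 0) \<noteq> 0 \<and> (if q = v then b else 0) \<noteq> 0}
     = (if s = u + v \<and> a \<noteq> 0 \<and> b \<noteq> 0 then {(u, v)} else {})" by (auto split: if_splits)
  then show ?thesis unfolding conv_def by auto
qed

lemma closed_of_rb:
  fixes S1 :: "'a::comm_monoid_add set"
  assumes rb: "rota_baxter (A :: ('a \<Rightarrow> 'r::comm_ring_1) set) (\<lambda>f s. if s \<in> S1 then f s else 0)"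
    and del: "\<And>u. (\<lambda>t. if t = u then 1 else (0::'r)) \<in> A"
    and nz: "(1::'r) \<noteq> 0"
  shows "\<forall>u v. u \<in> S1 \<longrightarrow> v \<in> S1 \<longrightarrow> u + v \<in> S1"
    and "\<forall>u v. u \<notin> S1 \<longrightarrow> v \<notin> S1 \<longrightarrow> u + v \<notin> S1"
proof -
  have id: "\<And>x y. x \<in> A \<Longrightarrow> y \<in> A \<Longrightarrow> conv (\<lambda>s. if s \<in> S1 then x s else 0) (\<lambda>s. if s \<in> S1 then y s else 0) =
     (\<lambda>s. (if s \<in> S1 then conv x (\<lambda>s. if s \<in> S1 then y s else 0) s else 0)
        + (if s \<in> S1 then conv (\<lambda>s. if s \<in> S1 then x s else 0) y s else 0)
        - (if s \<in> S1 then conv x y s else 0))"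
    using rb unfolding rota_baxter_def by blast
  have Pd: "\<And>u. (\<lambda>s. if s \<in> S1 then (if s = u then 1 else 0) else 0)
      = (\<lambda>t. if t = u then (if u \<in> S1 then 1 else 0) else (0::'r))" by auto
  have key: "(if u \<in> S1 then 1 else 0) * (if v \<in> S1 then 1 else 0) =
    (if u + v \<in> S1 then (if v \<in> S1 then 1 else 0) + (if u \<in> S1 then 1 else 0) - 1 else (0::'r))" for u v
    using fun_cong[OF id[OF del[of u] del[of v]], of "u+v"] unfolding Pd conv_delta by simp
  show "\<forall>u v. u \<in> S1 \<longrightarrow> v \<in> S1 \<longrightarrow> u + v \<in> S1"
  proof (intro allI impI)
    fix u v assume "u \<in> S1" "v \<in> S1"
    then show "u + v \<in> S1" using key[of u v] nz by (auto split: if_splits)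
  qed
  show "\<forall>u v. u \<notin> S1 \<longrightarrow> v \<notin> S1 \<longrightarrow> u + v \<notin> S1"
  proof (intro allI impI)
    fix u v assume "u \<notin> S1" "v \<notin> S1"
    then show "u + v \<notin> S1" using key[of u v] nz by (auto split: if_splits)
  qed
qed

lemma rb_of_closed:
  fixes S1 :: "'a::comm_monoid_add set"
  assumes c1: "\<forall>u v. u \<in> S1 \<longrightarrow> v \<in> S1 \<longrightarrow> u + v \<in> S1"
    and c2: "\<forall>u v. u \<notin> S1 \<longrightarrow> v \<notin> S1 \<longrightarrow> u + v \<notin> S1"
    and cl: "\<And>x. x \<in> A \<Longrightarrow> (\<lambda>s. if s \<in> S1 then x s else 0) \<in> A"
    and fin: "\<And>x y s. x \<in> A \<Longrightarrow> y \<in> A \<Longrightarrow> finite {(u,v). u+v=s \<and> x u\<noteq>0 \<and> y v\<noteq>0}"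
  shows "rota_baxter (A :: ('a \<Rightarrow> 'r::comm_ring_1) set) (\<lambda>f s. if s \<in> S1 then f s else 0)"
  unfolding rota_baxter_def
proof (intro conjI ballI allI ext)
  fix x y s assume x: "x \<in> A" and y: "y \<in> A"
  define F where "F = {(u,v). u+v=s \<and> x u\<noteq>0 \<and> y v\<noteq>0}"
  have fF: "finite F" unfolding F_def by (rule fin[OF x y])
  have FF: "F \<subseteq> {(u,v). u+v=s}" unfolding F_def by auto
  let ?Px = "\<lambda>s. if s \<in> S1 then x s else 0" and ?Py = "\<lambda>s. if s \<in> S1 then y s else 0"
  have e1: "conv ?Px ?Py s = (\<Sum>(u,v)\<in>F. ?Px u * ?Py v)"
    by (rule conv_sum[OF fF _ FF]) (auto simp: F_def split: if_splits)
  have e2: "conv x ?Py s = (\<Sum>(u,v)\<in>F. x u * ?Py v)"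
    by (rule conv_sum[OF fF _ FF]) (auto simp: F_def split: if_splits)
  have e3: "conv ?Px y s = (\<Sum>(u,v)\<in>F. ?Px u * y v)"
    by (rule conv_sum[OF fF _ FF]) (auto simp: F_def split: if_splits)
  have e4: "conv x y s = (\<Sum>(u,v)\<in>F. x u * y v)"
    by (rule conv_sum[OF fF _ FF]) (auto simp: F_def split: if_splits)
  show "conv ?Px ?Py s =
    (if s \<in> S1 then conv x ?Py s else 0) + (if s \<in> S1 then conv ?Px y s else 0) - (if s \<in> S1 then conv x y s else 0)"
  proof (cases "s \<in> S1")
    case True
    have "(\<Sum>(u,v)\<in>F. ?Px u * ?Py v) = (\<Sum>(u,v)\<in>F. x u * ?Py v + ?Px u * y v - x u * y v)"
    proof (rule sum.cong[OF refl])
      fix p assume "p \<in> F"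
      then obtain u v where p: "p = (u,v)" "u + v = s" unfolding F_def by auto
      then have "u \<in> S1 \<or> v \<in> S1" using c2 True by blast
      then show "(case p of (u,v) \<Rightarrow> ?Px u * ?Py v) = (case p of (u,v) \<Rightarrow> x u * ?Py v + ?Px u * y v - x u * y v)"
        using p by (auto simp: algebra_simps)
    qed
    also have "\<dots> = (\<Sum>(u,v)\<in>F. x u * ?Py v) + (\<Sum>(u,v)\<in>F. ?Px u * y v) - (\<Sum>(u,v)\<in>F. x u * y v)"
      by (simp add: case_prod_beta sum_subtractf sum.distrib)
    finally show ?thesis using True e1 e2 e3 e4 by simp
  next
    case False
    have "(\<Sum>(u,v)\<in>F. ?Px u * ?Py v) = 0"
    proof (rule sum.neutral, rule ballI)
      fix p assume "p \<in> F"
      then obtain u v where p: "p = (u,v)" "u + v = s" unfolding F_def by auto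
      then have "\<not> (u \<in> S1 \<and> v \<in> S1)" using c1 False by blast
      then show "(case p of (u,v) \<Rightarrow> ?Px u * ?Py v) = 0" using p by auto
    qed
    then show ?thesis using False e1 by simp
  qed
qed (use cl in auto)

lemma artinian_subset: "artinian B \<Longrightarrow> A \<subseteq> B \<Longrightarrow> artinian A"
  unfolding artinian_def by blast
lemma narrow_subset: "narrow B \<Longrightarrow> A \<subseteq> B \<Longrightarrow> narrow A"
  unfolding narrow_def by (meson order_trans)
lemma artinian_finite:
  assumes fA: "finite (A :: 'a::order set)" shows "artinian A"
proof (unfold artinian_def, rule notI, elim exE)
  fix g :: "nat \<Rightarrow> 'a" assume g: "\<forall>n. g n \<in> A \<and> g (Suc n) < g n"
  have lt: "g (Suc (m + k)) < g m" for m k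
  proof (induction k)
    case 0 then show ?case using g by simp
  next
    case (Suc k)
    have "g (Suc (Suc (m + k))) < g (Suc (m + k))" using g by blast
    then show ?case using Suc.IH by simp
  qed
  have "inj g"
  proof (rule injI)
    fix m n assume "g m = g n"
    show "m = n"
    proof (rule ccontr)
      assume "m \<noteq> n"
      then show False
      proof (rule linorder_neqE_nat)
        assume "m < n" then obtain k where k: "n = Suc (m + k)" using less_imp_Suc_add by blast
        have "g n < g m" unfolding k by (rule lt)
        then show False using \<open>g m = g n\<close> by simp
      next
        assume "n < m" then obtain k where k: "m = Suc (n + k)" using less_imp_Suc_add by blast
        have "g m < g n" unfolding k by (rule lt)
        then show False using \<open>g m = g n\<close> by simp
      qed
    qed
  qed
  moreover have "range g \<subseteq> A" using g by auto
  then have "finite (range g)" using fA by (rule finite_subset)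
  then have "finite (UNIV :: nat set)" using \<open>inj g\<close> by (rule finite_imageD)
  then show False by simp
qed

lemma narrow_finite:
  assumes "finite A" shows "narrow A"
  unfolding narrow_def
proof (intro allI impI)
  fix B assume "B \<subseteq> A"
  then show "finite B" using assms by (rule finite_subset)
qed

theorem corollary2p3:
  fixes S1 S2 :: "'a::{comm_monoid_add, order} set"
  assumes "strictly_ordered_monoid TYPE('a)"
    and "S1 \<inter> S2 = {}" and "S1 \<union> S2 = UNIV"
  shows "rota_baxter (monoid_algebra :: ('a \<Rightarrow> 'r::comm_ring_1) set) (\<lambda>f s. if s \<in> S1 then f s else 0)
     \<longleftrightarrow> rota_baxter (gen_power_series :: ('a \<Rightarrow> 'r) set) (\<lambda>f s. if s \<in> S1 then f s else 0)"
proof -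
  let ?P = "\<lambda>(f::'a \<Rightarrow> 'r) s. if s \<in> S1 then f s else 0"
  show ?thesis
  proof (cases "(1::'r) = 0")
    case True then show ?thesis using rb_trivial by blast
  next
    case nz: False
    have delM: "(\<lambda>t. if t = u then 1 else (0::'r)) \<in> monoid_algebra" for u
      unfolding monoid_algebra_def supp_def by (auto intro: finite_subset[of _ "{u}"])
    have delG: "(\<lambda>t. if t = u then 1 else (0::'r)) \<in> gen_power_series" for u
      unfolding gen_power_series_def supp_def
      by (auto intro!: artinian_finite narrow_finite intro: finite_subset[of _ "{u}"])
    have suppP: "supp (?P x) \<subseteq> supp x" for x unfolding supp_def by auto
    have RM: "rota_baxter (monoid_algebra :: ('a \<Rightarrow> 'r) set) ?P"
      if c1: "\<forall>u v. u \<in> S1 \<longrightarrow> v \<in> S1 \<longrightarrow> u + v \<in> S1"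
        and c2: "\<forall>u v. u \<notin> S1 \<longrightarrow> v \<notin> S1 \<longrightarrow> u + v \<notin> S1"
    proof (rule rb_of_closed[OF c1 c2])
      fix x :: "'a \<Rightarrow> 'r" assume "x \<in> monoid_algebra"
      then show "?P x \<in> monoid_algebra" using suppP[of x] unfolding monoid_algebra_def
        by (auto intro: finite_subset)
    next
      fix x y :: "'a \<Rightarrow> 'r" and s assume "x \<in> monoid_algebra" "y \<in> monoid_algebra"
      then have "finite (supp x \<times> supp y)" unfolding monoid_algebra_def by auto
      then show "finite {(u,v). u+v=s \<and> x u\<noteq>0 \<and> y v\<noteq>0}"
        by (rule finite_subset[rotated]) (auto simp: supp_def)
    qed
    have RG: "rota_baxter (gen_power_series :: ('a \<Rightarrow> 'r) set) ?P"
      if c1: "\<forall>u v. u \<in> S1 \<longrightarrow> v \<in> S1 \<longrightarrow> u + v \<in> S1"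
        and c2: "\<forall>u v. u \<notin> S1 \<longrightarrow> v \<notin> S1 \<longrightarrow> u + v \<notin> S1"
    proof (rule rb_of_closed[OF c1 c2])
      fix x :: "'a \<Rightarrow> 'r" assume "x \<in> gen_power_series"
      then show "?P x \<in> gen_power_series" using suppP[of x] unfolding gen_power_series_def
        by (auto intro: artinian_subset narrow_subset)
    next
      fix x y :: "'a \<Rightarrow> 'r" and s assume "x \<in> gen_power_series" "y \<in> gen_power_series"
      then have "finite {(u, v). u + v = s \<and> u \<in> supp x \<and> v \<in> supp y}"
        unfolding gen_power_series_def by (intro fin_pairs[OF assms(1)]) auto
      then show "finite {(u,v). u+v=s \<and> x u\<noteq>0 \<and> y v\<noteq>0}"
        by (rule finite_subset[rotated]) (auto simp: supp_def)
    qed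
    show ?thesis
    proof
      assume "rota_baxter (monoid_algebra :: ('a \<Rightarrow> 'r) set) ?P"
      from closed_of_rb[OF this delM nz] show "rota_baxter (gen_power_series :: ('a \<Rightarrow> 'r) set) ?P"
        by (rule RG)
    next
      assume "rota_baxter (gen_power_series :: ('a \<Rightarrow> 'r) set) ?P"
      from closed_of_rb[OF this delG nz] show "rota_baxter (monoid_algebra :: ('a \<Rightarrow> 'r) set) ?P"
        by (rule RM)
    qed
  qed
qed
end
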